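(* Let $\mathbf{k}$ be a commutative unital ring, $R$ a $\mathbf{k}$-algebra, $\lambda\in\mathbf{k}$, and $P$ a Rota-Baxter operator of weight $\lambda$ on $R$. Let $\tilde P:=-\lambda\,\mathrm{id}_R-P$. (1) For all $a,b\in\mathbf{k}$, the operator $Q:=aP+b\tilde P$ is an extended Rota-Baxter operator of weight $(\lambda(a+b),ab\lambda^2)$. (2) Let $\mu,\kappa\in\mathbf{k}$ and let $a,b\in\mathbf{k}$ be the roots of $t^2-\mu t+\kappa$ (so $t^2-\mu t+\kappa=(t-a)(t-b)$). Then $Q:=aP+b\tilde P$ is an extended Rota-Baxter operator of weight $(\mu\lambda,\kappa\lambda^2)$. In particular, if $P$ is a Rota-Baxter operator of weight $1$, then $Q$ is an extended Rota-Baxter operator of weight $(\mu,\kappa)$.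
   Context: A Rota-Baxter operator of weight $\lambda$ on a $\mathbf{k}$-algebra $R$ is a $\mathbf{k}$-linear map $P:R\to R$ with $P(x)P(y)=P(xP(y))+P(P(x)y)+\lambda P(xy)$ for all $x,y\in R$. For $\lambda,\kappa\in\mathbf{k}$, an extended Rota-Baxter operator of weight $(\lambda,\kappa)$ on $R$ is a $\mathbf{k}$-linear map $P:R\to R$ such that $P(x)P(y)=P(xP(y))+P(P(x)y)+\lambda P(xy)+\kappa xy$ for all $x,y\in R$. *)

theory Defs
  imports Main "HOL-Computational_Algebra.Polynomial"
begin

definition k_algebra :: "('k::comm_ring_1 \<Rightarrow> 'r::ring \<Rightarrow> 'r) \<Rightarrow> bool" where
  "k_algebra smul \<longleftrightarrow> module smul \<and>
     (\<forall>c x y. smul c (x * y) = smul c x * y \<and> smul c (x * y) = x * smul c y)"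

definition rota_baxter :: "('k::comm_ring_1 \<Rightarrow> 'r::ring \<Rightarrow> 'r) \<Rightarrow> 'k \<Rightarrow> ('r \<Rightarrow> 'r) \<Rightarrow> bool" where
  "rota_baxter smul lam P \<longleftrightarrow> module_hom smul smul P \<and>
     (\<forall>x y. P x * P y = P (x * P y) + P (P x * y) + smul lam (P (x * y)))"

definition ext_rota_baxter :: "('k::comm_ring_1 \<Rightarrow> 'r::ring \<Rightarrow> 'r) \<Rightarrow> 'k \<Rightarrow> 'k \<Rightarrow> ('r \<Rightarrow> 'r) \<Rightarrow> bool" where
  "ext_rota_baxter smul lam kap P \<longleftrightarrow> module_hom smul smul P \<and>
     (\<forall>x y. P x * P y = P (x * P y) + P (P x * y) + smul lam (P (x * y)) + smul kap (x * y))"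

end

theory Submission
  imports Defs
begin

lemma core:
  fixes s :: "'k::comm_ring_1 \<Rightarrow> 'r::ring \<Rightarrow> 'r"
  assumes alg: "k_algebra s" and rb: "rota_baxter s lam P"
  shows "ext_rota_baxter s (c*lam + d + d) (d*(c*lam+d)) (\<lambda>x. s c (P x) - s d x)"
proof -
  have m: "module s" and ml: "\<And>c x y. s c (x * y) = s c x * y" "\<And>c x y. s c (x * y) = x * s c y"
    using alg unfolding k_algebra_def by blast+
  interpret module s by (rule m)
  interpret h: module_hom s s P using rb by (simp add: rota_baxter_def)
  have R: "\<And>x y. P x * P y = P (x * P y) + P (P x * y) + s lam (P (x * y))"
    using rb by (simp add: rota_baxter_def)
  have ml1: "\<And>c x y. s c x * y = s c (x * y)" "\<And>c x y. x * s c y = s c (x * y)" using ml by metis+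
  have hom: "module_hom s s (\<lambda>x. s c (P x) - s d x)"
    by unfold_locales (auto simp: h.add h.scale algebra_simps scale_left_commute)
  have two: "\<And>u v z. s (u * (v * 2)) z = s (u*v) z + s (u*v) z" "\<And>v z. s (v * 2) z = s v z + s v z"
    by (metis mult_2_right distrib_left scale_left_distrib)+
  show ?thesis unfolding ext_rota_baxter_def
  proof (intro conjI allI hom)
    fix x y
    have L: "(s c (P x) - s d x) * (s c (P y) - s d y) = s (c*c) (P x * P y) - s (c*d) (x * P y) - s (c*d) (P x * y) + s (d*d) (x*y)"
      by (simp add: algebra_simps ml1 mult.commute)
    show "(s c (P x) - s d x) * (s c (P y) - s d y) =
         s c (P (x * (s c (P y) - s d y))) - s d (x * (s c (P y) - s d y)) +
         (s c (P ((s c (P x) - s d x) * y)) - s d ((s c (P x) - s d x) * y)) +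
         s (c * lam + d + d) (s c (P (x * y)) - s d (x * y)) +
         s (d * (c * lam + d)) (x * y)"
      unfolding L R by (simp add: algebra_simps ml1 h.add h.scale h.diff mult.commute mult.left_commute two)
  qed
qed

theorem corollary2p6:
  fixes smul :: "'k::comm_ring_1 \<Rightarrow> 'r::ring \<Rightarrow> 'r"
    and lam :: 'k and P :: "'r \<Rightarrow> 'r"
  assumes alg: "k_algebra smul"
    and rb: "rota_baxter smul lam P"
  defines "Pt \<equiv> (\<lambda>x. - smul lam x - P x)"
  shows "(\<forall>a b. ext_rota_baxter smul (lam * (a + b)) (a * b * lam ^ 2)
                 (\<lambda>x. smul a (P x) + smul b (Pt x)))
       \<and> (\<forall>mu kap a b. [:kap, - mu, 1:] = [:- a, 1:] * [:- b, 1:] \<longrightarrow>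
           ext_rota_baxter smul (mu * lam) (kap * lam ^ 2) (\<lambda>x. smul a (P x) + smul b (Pt x))
           \<and> (lam = 1 \<longrightarrow> ext_rota_baxter smul mu kap (\<lambda>x. smul a (P x) + smul b (Pt x))))"
  proof -
  have m: "module smul" using alg by (simp add: k_algebra_def)
  interpret module smul by (rule m)
  have Q: "\<And>a b. (\<lambda>x. smul a (P x) + smul b (Pt x)) = (\<lambda>x. smul (a-b) (P x) - smul (b*lam) x)"
    by (auto simp: Pt_def algebra_simps)
  have gen: "\<And>a b. ext_rota_baxter smul (lam * (a + b)) (a * b * lam ^ 2)
                 (\<lambda>x. smul a (P x) + smul b (Pt x))"
  proof -
    fix a b
    have "ext_rota_baxter smul ((a-b)*lam + b*lam + b*lam) ((b*lam)*((a-b)*lam+b*lam)) (\<lambda>x. smul (a-b) (P x) - smul (b*lam) x)"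
      by (rule core[OF alg rb])
    moreover have "(a-b)*lam + b*lam + b*lam = lam * (a + b)" "(b*lam)*((a-b)*lam+b*lam) = a * b * lam ^ 2"
      by (simp_all add: algebra_simps power2_eq_square)
    ultimately show "ext_rota_baxter smul (lam * (a + b)) (a * b * lam ^ 2)
                 (\<lambda>x. smul a (P x) + smul b (Pt x))" by (simp add: Q)
  qed
  show ?thesis
  proof (intro conjI allI impI gen)
    fix mu kap a b :: 'k
    assume "[:kap, - mu, 1:] = [:- a, 1:] * [:- b, 1:]"
    hence "[:kap, - mu, 1:] = [:a*b, -(a+b), 1:]" by (simp add: algebra_simps)
    hence e1: "kap = a*b" and e2: "-mu = -(a+b)" by simp_all
    from e2 have e3: "mu = a+b" by (simp only: neg_equal_iff_equal)
    note e = e1 e3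
    show "ext_rota_baxter smul (mu * lam) (kap * lam ^ 2) (\<lambda>x. smul a (P x) + smul b (Pt x))"
      using gen[of a b] e by (simp add: mult.commute)
    assume "lam = 1"
    then show "ext_rota_baxter smul mu kap (\<lambda>x. smul a (P x) + smul b (Pt x))"
      using gen[of a b] e by simp
  qed
qed

end
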